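(* Let $n\geq 2$, $\lambda>0$, $\rho>1$, and let $X_1,\ldots,X_n$ be i.i.d. $\mathrm{Exp}(\lambda)$ (density $\lambda e^{-\lambda x}$ on $(0,\infty)$). Let $X_{(1)}\le\cdots\le X_{(n)}$ be the order statistics and \[M_n\coloneqq\frac{\log X_{(n)}-\log X_{(1)}}{\log\rho}+1 .\] Then for $\mu>1$ and $0<q<1$, \begin{align*} F_{M_n}(\mu)&=(n-1)\,B\!\left(\frac{\rho^{\mu-1}+n-1}{\rho^{\mu-1}-1},\,n-1\right),\\ f_{M_n}(\mu)&=\frac{n\rho^{\mu-1}F_{M_n}(\mu)\log\rho}{(\rho^{\mu-1}-1)^2}\left\{\psi\!\left(\frac{n\rho^{\mu-1}}{\rho^{\mu-1}-1}\right)-\psi\!\left(\frac{\rho^{\mu-1}+n-1}{\rho^{\mu-1}-1}\right)\right\},\\ F_{M_n}^{-1}(q)&\sim\log_\rho\!\left(\frac{n\log(n-1)+\log(1/q)}{\log(1/q)}\right)+1\sim\log_\rho n-\log_\rho(-\log q), \end{align*} where the asymptotic results in the last line hold as either or both $n\to\infty$ and $q\to1^-$, and the first asymptotic equivalence in the last line also holds as $q\to0^+$ with $n$ fixed.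
   Context: $F_{M_n}$, $f_{M_n}$, $F_{M_n}^{-1}$ denote the CDF, density and quantile function of $M_n$. $B(x,y)=\int_0^1 t^{x-1}(1-t)^{y-1}dt$ is the Beta function and $\psi=(\log\Gamma)'$ is the digamma function. $a\sim b$ means the ratio tends to $1$ in the stated limit. *)

theory Defs
  imports "HOL-Probability.Probability" "HOL-Library.Landau_Symbols"
begin

definition Mstat :: "real \<Rightarrow> nat \<Rightarrow> (nat \<Rightarrow> 'a \<Rightarrow> real) \<Rightarrow> 'a \<Rightarrow> real" where
  "Mstat \<rho> n Y \<omega> =
     (ln (Max ((\<lambda>i. Y i \<omega>) ` {..<n})) - ln (Min ((\<lambda>i. Y i \<omega>) ` {..<n}))) / ln \<rho> + 1"

definition quantile :: "(real \<Rightarrow> real) \<Rightarrow> real \<Rightarrow> real" where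
  "quantile F q = Inf {x. q \<le> F x}"

end

theory Submission
  imports Defs "HOL-Real_Asymp.Real_Asymp"
begin

lemma beta_poch:
  fixes a :: real and m :: nat
  assumes a: "a > 0" and m: "m \<ge> 1"
  shows "real m * Beta (1 + a) (real m) = fact m / pochhammer (1 + a) m"
proof -
  have np1: "1 + a \<notin> \<int>\<^sub>\<le>\<^sub>0" using a by (auto elim!: nonpos_Ints_cases)
  have npm: "real m \<notin> \<int>\<^sub>\<le>\<^sub>0" using m by (auto elim!: nonpos_Ints_cases)
  have r: "rGamma (1 + a) = pochhammer (1 + a) m * rGamma (1 + a + real m)"
    by (rule pochhammer_rGamma)
  have pp: "pochhammer (1 + a) m > 0" using a by (intro pochhammer_pos) auto
  have g1: "Gamma (1 + a) * rGamma (1 + a) = 1"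
    using np1 by (simp add: rGamma_inverse_Gamma Gamma_eq_zero_iff)
  have gm: "real m * Gamma (real m) = fact m"
  proof -
    have "Gamma (real m + 1) = real m * Gamma (real m)" using npm by (rule Gamma_plus1)
    moreover have "Gamma (real m + 1) = fact m" using Gamma_fact[of m] by (simp add: add.commute)
    ultimately show ?thesis by simp
  qed
  have "real m * Beta (1 + a) (real m) = (real m * Gamma (real m)) * (Gamma (1 + a) * rGamma (1 + a + real m))"
    by (simp add: Beta_altdef algebra_simps)
  also have "Gamma (1 + a) * rGamma (1 + a + real m) = 1 / pochhammer (1 + a) m"
    using r g1 pp by (simp add: field_simps)
  finally show ?thesis using gm by simp
qed


lemma exp_density_hbi:
  fixes l :: real assumes l: "l > 0"
  shows "has_bochner_integral lborel (exponential_density l) 1"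
proof (rule has_bochner_integral_nn_integral)
  show "exponential_density l \<in> borel_measurable lborel" by simp
  show "AE x in lborel. 0 \<le> exponential_density l x" using l by (simp add: exponential_density_nonneg)
  have "emeasure (density lborel (exponential_density l)) (space (density lborel (exponential_density l))) = 1"
    using prob_space.emeasure_space_1[OF prob_space_exponential_density[OF l]] .
  then have "emeasure (density lborel (exponential_density l)) UNIV = 1" by simp
  then show "(\<integral>\<^sup>+ x. ennreal (exponential_density l x) \<partial>lborel) = ennreal 1"
    by (subst (asm) emeasure_density) auto
qed simp

lemma K_hbi:
  fixes l c s :: real and m :: nat
  assumes l: "l > 0" and c: "c > 0" and s: "s > 0"
  shows "has_bochner_integral lborel
     (\<lambda>x. indicator {0..} x * (l * exp (- l * s * x) * (1 - exp (- l * c * x)) ^ m))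
     (fact m / (c * pochhammer (s / c) (Suc m)))"
  using s
proof (induction m arbitrary: s)
  case 0
  have "has_bochner_integral lborel (\<lambda>x. exponential_density (l * s) x / s) (1 / s)"
    by (intro has_bochner_integral_divide_zero exp_density_hbi) (use l 0 in simp)
  moreover have "(\<lambda>x. exponential_density (l * s) x / s) =
     (\<lambda>x. indicator {0..} x * (l * exp (- l * s * x) * (1 - exp (- l * c * x)) ^ 0))"
    using 0 by (auto simp: exponential_density_def fun_eq_iff indicator_def algebra_simps)
  moreover have "1 / s = fact 0 / (c * pochhammer (s / c) (Suc 0))"
    using c by simp
  ultimately show ?case by simp
next
  case (Suc m)
  have sc: "s + c > 0" using Suc c by simp
  have h: "has_bochner_integral lborel
     (\<lambda>x. indicator {0..} x * (l * exp (- l * s * x) * (1 - exp (- l * c * x)) ^ m)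
        - indicator {0..} x * (l * exp (- l * (s + c) * x) * (1 - exp (- l * c * x)) ^ m))
     (fact m / (c * pochhammer (s / c) (Suc m)) - fact m / (c * pochhammer ((s + c) / c) (Suc m)))"
    by (intro has_bochner_integral_diff Suc.IH Suc.prems sc)
  have feq: "(\<lambda>x. indicator {0..} x * (l * exp (- l * s * x) * (1 - exp (- l * c * x)) ^ m)
        - indicator {0..} x * (l * exp (- l * (s + c) * x) * (1 - exp (- l * c * x)) ^ m))
      = (\<lambda>x. indicator {0..} x * (l * exp (- l * s * x) * (1 - exp (- l * c * x)) ^ Suc m))"
  proof
    fix x
    have "exp (- l * (s + c) * x) = exp (- l * s * x) * exp (- l * c * x)"
      by (simp add: algebra_simps flip: exp_add)
    then show "indicator {0..} x * (l * exp (- l * s * x) * (1 - exp (- l * c * x)) ^ m)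
        - indicator {0..} x * (l * exp (- l * (s + c) * x) * (1 - exp (- l * c * x)) ^ m)
      = indicator {0..} x * (l * exp (- l * s * x) * (1 - exp (- l * c * x)) ^ Suc m)"
      by (simp add: algebra_simps)
  qed
  define y where "y = s / c"
  have y: "y > 0" using Suc.prems c by (simp add: y_def)
  have yc: "(s + c) / c = y + 1" using c by (simp add: y_def field_simps)
  have p1: "pochhammer y (Suc m) = y * pochhammer (y + 1) m" by (rule pochhammer_rec)
  have p2: "pochhammer (y + 1) (Suc m) = pochhammer (y + 1) m * (y + 1 + real m)"
    by (simp add: pochhammer_Suc)
  have p3: "pochhammer y (Suc (Suc m)) = y * (pochhammer (y + 1) m * (y + 1 + real m))"
    by (simp only: pochhammer_rec[of y "Suc m"] p2)
  have pp: "pochhammer (y + 1) m > 0" using y by (intro pochhammer_pos) simp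
  have "fact m / (c * pochhammer (s / c) (Suc m)) - fact m / (c * pochhammer ((s + c) / c) (Suc m))
      = fact (Suc m) / (c * pochhammer (s / c) (Suc (Suc m)))"
  proof -
    have alg: "\<And>F P y c k :: real. P > 0 \<Longrightarrow> y > 0 \<Longrightarrow> c > 0 \<Longrightarrow> k \<ge> 0 \<Longrightarrow>
      F / (c * (y * P)) - F / (c * (P * (y + 1 + k))) = ((k + 1) * F) / (c * (y * (P * (y + 1 + k))))"
    proof -
      fix F P y c k :: real assume a: "P > 0" "y > 0" "c > 0" "k \<ge> 0"
      define z where "z = y + 1 + k"
      have z: "z > 0" "k + 1 = z - y" using a by (auto simp: z_def)
      show "F / (c * (y * P)) - F / (c * (P * (y + 1 + k))) = ((k + 1) * F) / (c * (y * (P * (y + 1 + k))))"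
        unfolding z_def[symmetric] z(2) using a z(1) by (simp add: field_simps)
    qed
    have "fact (Suc m) = (real m + 1) * (fact m :: real)" by (simp add: algebra_simps)
    then show ?thesis
      unfolding yc y_def[symmetric] p1 p2 p3 using alg[OF pp y c, of "real m" "fact m"] by simp
  qed
  with h feq show ?case by simp
qed


lemma emeasure_D_Iic:
  fixes l a :: real assumes l: "l > 0" and a: "0 \<le> a"
  shows "emeasure (density lborel (exponential_density l)) {..a} = ennreal (1 - exp (- l * a))"
  using emeasure_erlang_density[OF l, of 0 a] a by (simp add: erlang_CDF_0)

lemma emeasure_D_Ioc:
  fixes l y z :: real assumes l: "l > 0" and y: "0 \<le> y" and yz: "y \<le> z"
  shows "emeasure (density lborel (exponential_density l)) {y<..z} = ennreal (exp (- l * y) - exp (- l * z))"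
proof -
  let ?D = "density lborel (exponential_density l)"
  have "{y<..z} = {..z} - {..y}" by auto
  then have "emeasure ?D {y<..z} = emeasure ?D {..z} - emeasure ?D {..y}"
    using yz by (simp add: emeasure_Diff emeasure_D_Iic[OF l y])
  also have "\<dots> = ennreal ((1 - exp (- l * z)) - (1 - exp (- l * y)))"
  proof -
    have "exp (- l * y) \<le> 1" using l y by (simp add: mult_nonneg_nonneg)
    then show ?thesis using emeasure_D_Iic[OF l y] emeasure_D_Iic[OF l, of z] y yz
      by (simp add: ennreal_minus)
  qed
  finally show ?thesis by simp
qed

lemma emeasure_D_sing:
  fixes l y :: real
  shows "emeasure (density lborel (exponential_density l)) {y} = 0"
proof -
  have "emeasure (density lborel (exponential_density l)) {y} =
      (\<integral>\<^sup>+ x. ennreal (exponential_density l x) * indicator {y} x \<partial>lborel)"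
    by (rule emeasure_density) auto
  also have "\<dots> = 0"
    by (rule nn_integral_zero') (use AE_lborel_singleton[of y] in \<open>auto elim!: eventually_mono\<close>)
  finally show ?thesis .
qed

lemma emeasure_D_Icc:
  fixes l y z :: real assumes l: "l > 0" and y: "0 \<le> y" and yz: "y \<le> z"
  shows "emeasure (density lborel (exponential_density l)) {y..z} = ennreal (exp (- l * y) - exp (- l * z))"
proof -
  have "{y..z} = {y} \<union> {y<..z}" using yz by auto
  then have "emeasure (density lborel (exponential_density l)) {y..z} =
     emeasure (density lborel (exponential_density l)) {y} + emeasure (density lborel (exponential_density l)) {y<..z}"
    by (simp add: plus_emeasure)
  then show ?thesis using emeasure_D_sing emeasure_D_Ioc[OF l y yz] by simp
qed


lemma dens_alg:
  fixes l t y :: real and m :: nat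
  shows "l * exp (- y * l) * (exp (- l * y) - exp (- l * (t * y))) ^ m
       = l * exp (- l * real (Suc m) * y) * (1 - exp (- l * (t - 1) * y)) ^ m"
proof -
  have "exp (- l * y) - exp (- l * (t * y)) = exp (- l * y) * (1 - exp (- l * (t - 1) * y))"
    by (simp add: algebra_simps flip: exp_add)
  moreover have e: "exp (- l * y) ^ m = exp (real m * (- l * y))" by (rule exp_of_nat_mult[symmetric])
  ultimately have "(exp (- l * y) - exp (- l * (t * y))) ^ m = exp (real m * (- l * y)) * (1 - exp (- l * (t - 1) * y)) ^ m"
    by (simp only: power_mult_distrib)
  moreover have "exp (- y * l) * exp (real m * (- l * y)) = exp (- l * real (Suc m) * y)"
    by (simp add: algebra_simps flip: exp_add)
  ultimately show ?thesis by (simp add: algebra_simps)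
qed

lemma PiM_event:
  fixes n :: nat and l t :: real
  assumes l: "l > 0" and t: "t > 1" and n: "n \<ge> 2"
  shows "emeasure (PiM {..<n} (\<lambda>_. density lborel (exponential_density l)))
     {x \<in> space (PiM {..<n} (\<lambda>_. borel)). \<forall>i\<in>{..<n}. 0 \<le> x i \<and> (\<forall>j\<in>{..<n}. x j \<le> t * x i)}
   = ennreal (real n * (fact (n - 1) / ((t - 1) * pochhammer (real n / (t - 1)) n)))"
proof -
  define D where "D = density lborel (exponential_density l)"
  define I where "I = {..<n}"
  define v where "v = fact (n - 1) / ((t - 1) * pochhammer (real n / (t - 1)) n)"
  define E where "E = (\<lambda>i. {x \<in> space (PiM I (\<lambda>_. borel)). 0 \<le> x i \<and>
      (\<forall>j\<in>I. j < i \<longrightarrow> x i < x j \<and> x j \<le> t * x i) \<and> (\<forall>j\<in>I. i < j \<longrightarrow> x i \<le> x j \<and> x j \<le> t * x i)})"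
  define E' where "E' = {x \<in> space (PiM I (\<lambda>_. borel)). \<forall>i\<in>I. 0 \<le> x i \<and> (\<forall>j\<in>I. x j \<le> t * x i)}"
  have finI: "finite I" by (simp add: I_def)
  have sD[measurable_cong]: "sets D = sets borel" by (simp add: D_def)
  have spD: "space D = UNIV" by (simp add: D_def)
  have probD: "prob_space D" unfolding D_def by (rule prob_space_exponential_density[OF l])
  have psf: "product_sigma_finite (\<lambda>_. D)"
    unfolding product_sigma_finite_def using prob_space_imp_sigma_finite[OF probD] by simp
  have sP: "sets (PiM I (\<lambda>_. D)) = sets (PiM I (\<lambda>_. borel))"
    by (rule sets_PiM_cong) (simp_all add: sD)
  have spP: "space (PiM I (\<lambda>_. D)) = space (PiM I (\<lambda>_. borel))"
    by (simp add: space_PiM spD)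
  have Esets: "E i \<in> sets (PiM I (\<lambda>_. borel))" if "i \<in> I" for i
    unfolding E_def not_less[symmetric] using that finI by measurable
  have E'sets: "E' \<in> sets (PiM I (\<lambda>_. borel))"
    unfolding E'_def not_less[symmetric] using finI by measurable
  have E'_eq: "E' = (\<Union>i\<in>I. E i)"
  proof (intro equalityI subsetI)
    fix x assume xE: "x \<in> E'"
    let ?P = "\<lambda>i. i \<in> I \<and> (\<forall>j\<in>I. x i \<le> x j)"
    have "I \<noteq> {}" using n by (auto simp: I_def lessThan_empty_iff)
    then have "Min (x ` I) \<in> x ` I" using finI by (intro Min_in) auto
    then obtain i0 where i0: "i0 \<in> I" "x i0 = Min (x ` I)" by auto
    have "?P i0" using i0 finI by auto
    then have Pi: "?P (LEAST i. ?P i)" by (rule LeastI)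
    define i where "i = (LEAST i. ?P i)"
    have Pi': "?P i" using Pi by (simp add: i_def)
    have lt: "x i < x j" if jj: "j \<in> I" "j < i" for j
    proof -
      have "\<not> ?P j" using jj(2) unfolding i_def by (rule not_less_Least)
      then obtain k where "k \<in> I" "x k < x j" using jj(1) by (auto simp: not_le)
      then show ?thesis using Pi' by force
    qed
    have "x \<in> E i" using xE Pi' lt unfolding E_def E'_def by auto
    then show "x \<in> (\<Union>i\<in>I. E i)" using Pi' by auto
  next
    fix x assume "x \<in> (\<Union>i\<in>I. E i)"
    then obtain i where i: "i \<in> I" "x \<in> E i" by auto
    have le: "x i \<le> x j" if "j \<in> I" for j
      using i that unfolding E_def by (cases "j < i"; cases "i < j") (auto simp: not_less)
    have x0: "0 \<le> x i" using i unfolding E_def by auto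
    have up: "x j \<le> t * x i" if "j \<in> I" for j
    proof (cases "j = i")
      case True then show ?thesis using x0 t by (simp add: mult_le_cancel_right1 mult_right_mono)
    next
      case False then have "j < i \<or> i < j" by auto
      then show ?thesis using i that unfolding E_def by auto
    qed
    show "x \<in> E'" unfolding E'_def
    proof (intro CollectI conjI ballI)
      show "x \<in> space (PiM I (\<lambda>_. borel))" using i unfolding E_def by auto
      fix a assume a: "a \<in> I"
      show "0 \<le> x a" using le[OF a] x0 by simp
      fix b assume b: "b \<in> I"
      have "t * x i \<le> t * x a" using le[OF a] t by simp
      then show "x b \<le> t * x a" using up[OF b] by simp
    qed
  qed
  have disj: "disjoint_family_on E I"
  proof (unfold disjoint_family_on_def, intro ballI impI)
    fix i k assume ik: "i \<in> I" "k \<in> I" "i \<noteq> k"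
    have "False" if "x \<in> E i" "x \<in> E k" "i < k" "i \<in> I" "k \<in> I" for x i k
      using that unfolding E_def by force
    then show "E i \<inter> E k = {}" using ik by (cases "i < k") (auto simp: not_less dest: le_neq_trans)
  qed
  have Ei: "emeasure (PiM I (\<lambda>_. D)) (E i) = ennreal v" if iI: "i \<in> I" for i
  proof -
    define J where "J = I - {i}"
    have IJ: "I = insert i J" using iI by (auto simp: J_def)
    have finJ: "finite J" "i \<notin> J" using finI by (auto simp: J_def)
    have cardJ: "card J = n - 1" using iI by (simp add: J_def I_def card_Diff_singleton)
    define g where "g = (\<lambda>y::real. exp (- l * y) - exp (- l * (t * y)))"
    define R where "R = (\<lambda>(y::real) j. if j < i then {y<..t*y} else {y..t*y})"
    have Esets': "E i \<in> sets (PiM (insert i J) (\<lambda>_. D))" using Esets[OF iI] sP IJ by simp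
    have inner: "(\<integral>\<^sup>+ x. indicator (E i) (x(i := y)) \<partial>PiM J (\<lambda>_. D)) =
        ennreal (indicator {0..} y * g y ^ (n - 1))" for y
    proof -
      have pt: "indicator (E i) (x(i := y)) = (indicator {0..} y * (\<Prod>j\<in>J. indicator (R y j) (x j)) :: ennreal)"
        if x: "x \<in> space (PiM J (\<lambda>_. D))" for x
      proof -
        have xs: "x(i := y) \<in> space (PiM I (\<lambda>_. borel))"
          using x IJ by (auto simp: space_PiM PiE_def extensional_def spD)
        have mem: "x(i := y) \<in> E i \<longleftrightarrow> 0 \<le> y \<and> (\<forall>j\<in>J. x j \<in> R y j)"
        proof
          assume h: "x(i := y) \<in> E i"
          have h0: "0 \<le> y" using h unfolding E_def by simp
          have h1: "y < x j \<and> x j \<le> t * y" if "j \<in> I" "j < i" for j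
            using h that unfolding E_def by auto
          have h2: "y \<le> x j \<and> x j \<le> t * y" if "j \<in> I" "i < j" for j
            using h that unfolding E_def by auto
          show "0 \<le> y \<and> (\<forall>j\<in>J. x j \<in> R y j)"
          proof (intro conjI ballI h0)
            fix j assume j: "j \<in> J"
            then have jI: "j \<in> I" and ji: "j \<noteq> i" by (auto simp: J_def)
            show "x j \<in> R y j"
            proof (cases "j < i")
              case True then show ?thesis using h1[OF jI True] by (simp add: R_def)
            next
              case False then have "i < j" using ji by simp
              then show ?thesis using h2[OF jI] False by (simp add: R_def)
            qed
          qed
        next
          assume h: "0 \<le> y \<and> (\<forall>j\<in>J. x j \<in> R y j)"
          have h1: "y < x j \<and> x j \<le> t * y" if "j \<in> I" "j < i" for j
          proof -
            have "j \<in> J" using that by (auto simp: J_def)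
            then have "x j \<in> R y j" using h by blast
            then show ?thesis using that by (simp add: R_def)
          qed
          have h2: "y \<le> x j \<and> x j \<le> t * y" if "j \<in> I" "i < j" for j
          proof -
            have "j \<in> J" using that by (auto simp: J_def)
            then have "x j \<in> R y j" using h by blast
            then show ?thesis using that by (simp add: R_def)
          qed
          show "x(i := y) \<in> E i"
            unfolding E_def using xs h h1 h2 by simp
        qed
        have pr: "(\<Prod>j\<in>J. indicator (R y j) (x j) :: ennreal) = (if \<forall>j\<in>J. x j \<in> R y j then 1 else 0)"
        proof (cases "\<forall>j\<in>J. x j \<in> R y j")
          case True then show ?thesis by (simp add: indicator_def)
        next
          case False
          then obtain j where "j \<in> J" "x j \<notin> R y j" by auto
          then show ?thesis using finJ(1) False by (auto simp: indicator_def intro!: prod_zero)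
        qed
        show ?thesis using finJ by (simp add: indicator_def mem pr)
      qed
      have Rs: "R y j \<in> sets D" for j unfolding R_def by (simp add: sD)
      have "(\<integral>\<^sup>+ x. indicator (E i) (x(i := y)) \<partial>PiM J (\<lambda>_. D)) =
          (\<integral>\<^sup>+ x. indicator {0..} y * (\<Prod>j\<in>J. indicator (R y j) (x j)) \<partial>PiM J (\<lambda>_. D))"
        by (rule nn_integral_cong) (simp add: pt)
      also have "\<dots> = indicator {0..} y * (\<integral>\<^sup>+ x. (\<Prod>j\<in>J. indicator (R y j) (x j)) \<partial>PiM J (\<lambda>_. D))"
        by (rule nn_integral_cmult) (use finJ Rs in measurable)
      also have "(\<integral>\<^sup>+ x. (\<Prod>j\<in>J. indicator (R y j) (x j)) \<partial>PiM J (\<lambda>_. D)) =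
          (\<Prod>j\<in>J. (\<integral>\<^sup>+ z. indicator (R y j) z \<partial>D))"
        by (rule product_sigma_finite.product_nn_integral_prod[OF psf finJ(1)]) (use Rs in measurable)
      also have "\<dots> = (\<Prod>j\<in>J. emeasure D (R y j))"
        using Rs by simp
      finally have eq: "(\<integral>\<^sup>+ x. indicator (E i) (x(i := y)) \<partial>PiM J (\<lambda>_. D)) =
          indicator {0..} y * (\<Prod>j\<in>J. emeasure D (R y j))" .
      show ?thesis
      proof (cases "0 \<le> y")
        case True
        have yy: "y \<le> t * y" using True t by (simp add: mult_le_cancel_right1)
        have g0: "0 \<le> g y"
        proof -
          have "0 \<le> l * y * (t - 1)" using True l t by simp
          then have "l * y \<le> l * (t * y)" by (simp add: algebra_simps)
          then show ?thesis unfolding g_def by simp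
        qed
        have "emeasure D (R y j) = ennreal (g y)" for j
          unfolding R_def D_def g_def
          using emeasure_D_Ioc[OF l True yy] emeasure_D_Icc[OF l True yy] by simp
        then have "(\<Prod>j\<in>J. emeasure D (R y j)) = ennreal (g y) ^ (n - 1)"
          by (simp add: cardJ)
        then show ?thesis using eq True g0 by (simp add: ennreal_power)
      next
        case False
        then show ?thesis using eq by simp
      qed
    qed
    have "emeasure (PiM I (\<lambda>_. D)) (E i) = (\<integral>\<^sup>+ x. indicator (E i) x \<partial>PiM (insert i J) (\<lambda>_. D))"
      using Esets' IJ by simp
    also have "\<dots> = (\<integral>\<^sup>+ y. (\<integral>\<^sup>+ x. indicator (E i) (x(i := y)) \<partial>PiM J (\<lambda>_. D)) \<partial>D)"
      by (rule product_sigma_finite.product_nn_integral_insert_rev[OF psf finJ])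
         (use Esets' in measurable)
    also have "\<dots> = (\<integral>\<^sup>+ y. ennreal (indicator {0..} y * g y ^ (n - 1)) \<partial>D)"
      by (simp add: inner)
    also have "\<dots> = (\<integral>\<^sup>+ y. ennreal (exponential_density l y) * ennreal (indicator {0..} y * g y ^ (n - 1)) \<partial>lborel)"
      unfolding D_def by (rule nn_integral_density) (auto simp: g_def)
    also have "\<dots> = (\<integral>\<^sup>+ y. ennreal (indicator {0..} y * (l * exp (- l * real n * y) * (1 - exp (- l * (t - 1) * y)) ^ (n - 1))) \<partial>lborel)"
    proof (rule nn_integral_cong)
      fix y :: real
      have g0: "0 \<le> g y" if "0 \<le> y"
      proof -
        have "0 \<le> l * y * (t - 1)" using that l t by simp
        then have "l * y \<le> l * (t * y)" by (simp add: algebra_simps)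
        then show ?thesis unfolding g_def by simp
      qed
      have "ennreal (exponential_density l y) * ennreal (indicator {0..} y * g y ^ (n - 1)) =
          ennreal (exponential_density l y * (indicator {0..} y * g y ^ (n - 1)))"
        using g0 l by (intro ennreal_mult[symmetric]) (auto simp: exponential_density_nonneg indicator_def)
      also have "exponential_density l y * (indicator {0..} y * g y ^ (n - 1)) =
         indicator {0..} y * (l * exp (- l * real n * y) * (1 - exp (- l * (t - 1) * y)) ^ (n - 1))"
        using dens_alg[of l y t "n - 1"] n by (auto simp: exponential_density_def indicator_def g_def)
      finally show "ennreal (exponential_density l y) * ennreal (indicator {0..} y * g y ^ (n - 1)) =
         ennreal (indicator {0..} y * (l * exp (- l * real n * y) * (1 - exp (- l * (t - 1) * y)) ^ (n - 1)))" .
    qed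
    also have "\<dots> = ennreal v"
    proof -
      have hb: "has_bochner_integral lborel (\<lambda>y. indicator {0..} y * (l * exp (- l * real n * y) * (1 - exp (- l * (t - 1) * y)) ^ (n - 1)))
          (fact (n - 1) / ((t - 1) * pochhammer (real n / (t - 1)) (Suc (n - 1))))"
        using K_hbi[of l "t - 1" "real n" "n - 1"] l t n by simp
      have "Suc (n - 1) = n" using n by simp
      then have hb': "has_bochner_integral lborel (\<lambda>y. indicator {0..} y * (l * exp (- l * real n * y) * (1 - exp (- l * (t - 1) * y)) ^ (n - 1))) v"
        using hb by (simp add: v_def)
      have nn: "AE y in lborel. 0 \<le> indicator {0..} y * (l * exp (- l * real n * y) * (1 - exp (- l * (t - 1) * y)) ^ (n - 1))"
        using l t by (intro AE_I2) (auto simp: indicator_def mult_nonneg_nonneg)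
      show ?thesis
        using nn_integral_eq_integral[OF _ nn] hb'
        by (simp add: has_bochner_integral_iff)
    qed
    finally show ?thesis .
  qed
  have "emeasure (PiM I (\<lambda>_. D)) E' = (\<Sum>i\<in>I. emeasure (PiM I (\<lambda>_. D)) (E i))"
    unfolding E'_eq using Esets disj finI sP by (intro sum_emeasure[symmetric]) auto
  also have "\<dots> = (\<Sum>i\<in>I. ennreal v)" using Ei by simp
  also have "\<dots> = ennreal (real n * v)"
  proof -
    have "v \<ge> 0" unfolding v_def using t n by (intro divide_nonneg_pos mult_pos_pos pochhammer_pos) auto
    then show ?thesis by (simp add: I_def ennreal_of_nat_eq_real_of_nat ennreal_mult)
  qed
  finally show ?thesis unfolding E'_def I_def D_def v_def by simp
qed


lemma Mstat_le_iff:
  fixes v :: "nat \<Rightarrow> real" and \<rho> \<mu> :: real and n :: nat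
  assumes pos: "\<And>i. i < n \<Longrightarrow> 0 < v i" and n: "n \<ge> 1" and rho: "\<rho> > 1"
  shows "(ln (Max (v ` {..<n})) - ln (Min (v ` {..<n}))) / ln \<rho> + 1 \<le> \<mu> \<longleftrightarrow>
         (\<forall>i\<in>{..<n}. 0 \<le> v i \<and> (\<forall>j\<in>{..<n}. v j \<le> \<rho> powr (\<mu> - 1) * v i))"
proof -
  define a where "a = Max (v ` {..<n})"
  define b where "b = Min (v ` {..<n})"
  define t where "t = \<rho> powr (\<mu> - 1)"
  have ne: "v ` {..<n} \<noteq> {}" using n by (auto simp: lessThan_empty_iff)
  have fin: "finite (v ` {..<n})" by simp
  have ain: "a \<in> v ` {..<n}" unfolding a_def using fin ne by (rule Max_in)
  have bin: "b \<in> v ` {..<n}" unfolding b_def using fin ne by (rule Min_in)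
  have a0: "a > 0" using ain pos by auto
  have b0: "b > 0" using bin pos by auto
  have t0: "t > 0" unfolding t_def using rho by simp
  have lr: "ln \<rho> > 0" using rho by simp
  have "(ln a - ln b) / ln \<rho> + 1 \<le> \<mu> \<longleftrightarrow> ln a - ln b \<le> (\<mu> - 1) * ln \<rho>"
  proof -
    have "(ln a - ln b) / ln \<rho> + 1 \<le> \<mu> \<longleftrightarrow> (ln a - ln b) / ln \<rho> \<le> \<mu> - 1" by linarith
    also have "\<dots> \<longleftrightarrow> ln a - ln b \<le> (\<mu> - 1) * ln \<rho>" by (rule pos_divide_le_eq[OF lr])
    finally show ?thesis .
  qed
  also have "\<dots> \<longleftrightarrow> ln a \<le> ln (b * t)"
    using b0 t0 rho by (simp add: ln_mult t_def ln_powr algebra_simps)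
  also have "\<dots> \<longleftrightarrow> a \<le> b * t" using a0 b0 t0 by simp
  also have "\<dots> \<longleftrightarrow> (\<forall>j\<in>{..<n}. v j \<le> b * t)"
    unfolding a_def using ne fin by (simp add: Max_le_iff)
  also have "\<dots> \<longleftrightarrow> (\<forall>i\<in>{..<n}. 0 \<le> v i \<and> (\<forall>j\<in>{..<n}. v j \<le> t * v i))"
  proof
    assume h: "\<forall>j\<in>{..<n}. v j \<le> b * t"
    show "\<forall>i\<in>{..<n}. 0 \<le> v i \<and> (\<forall>j\<in>{..<n}. v j \<le> t * v i)"
    proof (intro ballI conjI)
      fix i assume i: "i \<in> {..<n}"
      show "0 \<le> v i" using pos i by (simp add: less_imp_le)
      fix j assume j: "j \<in> {..<n}"
      have "b \<le> v i" unfolding b_def using i fin by (intro Min_le) auto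
      then have "b * t \<le> t * v i" using t0 by (simp add: mult.commute)
      then show "v j \<le> t * v i" using h j by force
    qed
  next
    assume h: "\<forall>i\<in>{..<n}. 0 \<le> v i \<and> (\<forall>j\<in>{..<n}. v j \<le> t * v i)"
    from bin obtain i where i: "i \<in> {..<n}" "b = v i" by auto
    show "\<forall>j\<in>{..<n}. v j \<le> b * t" using h i by (auto simp: mult.commute)
  qed
  finally show ?thesis unfolding a_def b_def t_def .
qed

lemma Mstat_meas:
  fixes M :: "'a measure" and Y :: "nat \<Rightarrow> 'a \<Rightarrow> real"
  assumes Ym: "\<And>i. i < n \<Longrightarrow> Y i \<in> borel_measurable M"
  shows "Mstat \<rho> n Y \<in> borel_measurable M"
proof -
  have [measurable]: "(\<lambda>\<omega>. Max ((\<lambda>i. Y i \<omega>) ` {..<n})) \<in> borel_measurable M"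
    by (rule borel_measurable_Max) (auto intro: Ym)
  have [measurable]: "(\<lambda>\<omega>. Min ((\<lambda>i. Y i \<omega>) ` {..<n})) \<in> borel_measurable M"
    by (rule borel_measurable_Min) (auto intro: Ym)
  show ?thesis unfolding Mstat_def[abs_def] by measurable
qed

lemma cdf_formula:
  fixes M :: "'a measure" and Y :: "nat \<Rightarrow> 'a \<Rightarrow> real"
  assumes P: "prob_space M" and ind: "prob_space.indep_vars M (\<lambda>_. borel) Y {..<n}"
    and ex: "\<And>i. i < n \<Longrightarrow> distributed M lborel (Y i) (exponential_density l)"
    and l: "l > 0" and rho: "\<rho> > 1" and n: "n \<ge> 2" and mu: "\<mu> > 1"
  shows "cdf (distr M borel (Mstat \<rho> n Y)) \<mu> =
    real n * (fact (n - 1) / ((\<rho> powr (\<mu> - 1) - 1) * pochhammer (real n / (\<rho> powr (\<mu> - 1) - 1)) n))"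
proof -
  interpret prob_space M by (rule P)
  define I where "I = {..<n}"
  define t where "t = \<rho> powr (\<mu> - 1)"
  define D where "D = density lborel (exponential_density l)"
  have t1: "t > 1"
  proof -
    have "\<rho> powr 0 < \<rho> powr (\<mu> - 1)" using rho mu by (intro powr_less_mono) auto
    then show ?thesis using rho by (simp add: t_def)
  qed
  have Ym: "Y i \<in> borel_measurable M" if "i < n" for i
    using distributed_measurable[OF ex[OF that]] by simp
  have Sm: "Mstat \<rho> n Y \<in> borel_measurable M" by (rule Mstat_meas) (rule Ym)
  define E\<omega> where "E\<omega> = {\<omega>\<in>space M. \<forall>i\<in>I. 0 \<le> Y i \<omega> \<and> (\<forall>j\<in>I. Y j \<omega> \<le> t * Y i \<omega>)}"
  define E' where "E' = {x \<in> space (PiM I (\<lambda>_. borel)). \<forall>i\<in>I. 0 \<le> x i \<and> (\<forall>j\<in>I. x j \<le> t * x i)}"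
  have "cdf (distr M borel (Mstat \<rho> n Y)) \<mu> = measure M (Mstat \<rho> n Y -` {..\<mu>} \<inter> space M)"
    unfolding cdf_def by (rule measure_distr[OF Sm]) simp
  also have "\<dots> = measure M E\<omega>"
  proof -
    have pos: "AE \<omega> in M. 0 < Y i \<omega>" if i: "i < n" for i
    proof -
      have "AE x in lborel. (x::real) \<noteq> 0" by (rule AE_lborel_singleton)
      then have "AE x in lborel. 0 < exponential_density l x \<longrightarrow> 0 < x"
        by (rule eventually_mono) (auto simp: exponential_density_def split: if_splits)
      then show ?thesis using distributed_AE2[OF ex[OF i], of "\<lambda>x. 0 < x"] by simp
    qed
    have allpos: "AE \<omega> in M. \<forall>i\<in>{..<n}. 0 < Y i \<omega>"
      by (rule AE_finite_allI) (use pos in auto)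
    have "emeasure M (Mstat \<rho> n Y -` {..\<mu>} \<inter> space M) = emeasure M E\<omega>"
    proof (rule emeasure_eq_AE)
      show "AE \<omega> in M. (\<omega> \<in> Mstat \<rho> n Y -` {..\<mu>} \<inter> space M) = (\<omega> \<in> E\<omega>)"
        using allpos
      proof (rule eventually_mono)
        fix \<omega> assume h: "\<forall>i\<in>{..<n}. 0 < Y i \<omega>"
        have "Mstat \<rho> n Y \<omega> \<le> \<mu> \<longleftrightarrow> (\<forall>i\<in>{..<n}. 0 \<le> Y i \<omega> \<and> (\<forall>j\<in>{..<n}. Y j \<omega> \<le> t * Y i \<omega>))"
          unfolding Mstat_def t_def using h n rho
          by (intro Mstat_le_iff[of n "\<lambda>i. Y i \<omega>"]) auto
        then show "(\<omega> \<in> Mstat \<rho> n Y -` {..\<mu>} \<inter> space M) = (\<omega> \<in> E\<omega>)"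
          unfolding E\<omega>_def I_def by auto
      qed
      show "Mstat \<rho> n Y -` {..\<mu>} \<inter> space M \<in> sets M" using Sm by measurable
      have [measurable]: "Y i \<in> borel_measurable M" if "i \<in> I" for i using Ym that by (simp add: I_def)
      show "E\<omega> \<in> sets M" unfolding E\<omega>_def not_less[symmetric]
        by measurable (simp_all add: I_def)
    qed
    then show ?thesis by (simp add: measure_def)
  qed
  also have "\<dots> = measure (PiM I (\<lambda>_. D)) E'"
  proof -
    define V where "V = (\<lambda>\<omega>. \<lambda>i\<in>I. Y i \<omega>)"
    have Vm: "V \<in> measurable M (PiM I (\<lambda>_. borel))"
      unfolding V_def by (rule measurable_restrict) (simp add: Ym I_def)
    have E's: "E' \<in> sets (PiM I (\<lambda>_. borel))"
      unfolding E'_def not_less[symmetric] by measurable (simp_all add: I_def)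
    have pre: "V -` E' \<inter> space M = E\<omega>"
      unfolding V_def E'_def E\<omega>_def by (auto simp: space_PiM)
    have Ine: "I \<noteq> {}" using n by (auto simp: I_def lessThan_empty_iff)
    have rv: "random_variable borel (Y i)" if "i \<in> I" for i using Ym that by (simp add: I_def)
    have dist: "distr M (PiM I (\<lambda>_. borel)) V = PiM I (\<lambda>i. distr M borel (Y i))"
      using indep_vars_iff_distr_eq_PiM'[OF Ine rv] ind unfolding V_def I_def by simp
    have dD: "distr M borel (Y i) = D" if "i \<in> I" for i
    proof -
      have i: "i < n" using that by (simp add: I_def)
      have "distr M lborel (Y i) = D"
        unfolding D_def by (rule distributed_distr_eq_density[OF ex[OF i]])
      moreover have "distr M borel (Y i) = distr M lborel (Y i)"
      proof (rule measure_eqI)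
        show "sets (distr M borel (Y i)) = sets (distr M lborel (Y i))" by simp
        fix A assume "A \<in> sets (distr M borel (Y i))"
        then show "emeasure (distr M borel (Y i)) A = emeasure (distr M lborel (Y i)) A"
          using Ym[OF i] by (simp add: emeasure_distr)
      qed
      ultimately show ?thesis by simp
    qed
    have "PiM I (\<lambda>i. distr M borel (Y i)) = PiM I (\<lambda>_. D)"
      by (rule PiM_cong) (simp_all add: dD)
    then have "measure M E\<omega> = measure (distr M (PiM I (\<lambda>_. borel)) V) E'"
      using measure_distr[OF Vm E's] pre dist by simp
    then show ?thesis using dist \<open>PiM I (\<lambda>i. distr M borel (Y i)) = PiM I (\<lambda>_. D)\<close> by simp
  qed
  also have "\<dots> = real n * (fact (n - 1) / ((t - 1) * pochhammer (real n / (t - 1)) n))"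
  proof -
    have "emeasure (PiM I (\<lambda>_. D)) E' = ennreal (real n * (fact (n - 1) / ((t - 1) * pochhammer (real n / (t - 1)) n)))"
      unfolding I_def D_def E'_def using PiM_event[OF l t1 n] by simp
    moreover have "0 \<le> real n * (fact (n - 1) / ((t - 1) * pochhammer (real n / (t - 1)) n))"
      using t1 n by (intro mult_nonneg_nonneg divide_nonneg_pos mult_pos_pos pochhammer_pos) auto
    ultimately show ?thesis by (simp add: measure_def)
  qed
  finally show ?thesis by (simp add: t_def)
qed


lemma value_G:
  fixes t :: real and n :: nat
  assumes t: "t > 1" and n: "n \<ge> 2"
  shows "real n * (fact (n - 1) / ((t - 1) * pochhammer (real n / (t - 1)) n)) =
         fact (n - 1) / pochhammer (1 + real n / (t - 1)) (n - 1)"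
proof -
  define a where "a = real n / (t - 1)"
  have a: "a > 0" using t n by (simp add: a_def)
  have pa: "pochhammer a n = a * pochhammer (a + 1) (n - 1)"
    using pochhammer_rec[of a "n - 1"] n by simp
  have rn: "real n = a * (t - 1)" using t by (simp add: a_def)
  have pp: "pochhammer (a + 1) (n - 1) > 0" using a by (intro pochhammer_pos) simp
  have gen: "\<And>F P c :: real. c > 0 \<Longrightarrow> (a * c) * (F / (c * (a * P))) = F / P"
    using a by (simp add: field_simps)
  have "real n * (fact (n - 1) / ((t - 1) * pochhammer a n)) = fact (n - 1) / pochhammer (a + 1) (n - 1)"
    unfolding pa using gen[of "t - 1" "fact (n - 1)" "pochhammer (a + 1) (n - 1)"] t rn by simp
  then show ?thesis unfolding a_def by (simp add: add.commute)
qed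

lemma value_Beta:
  fixes t :: real and n :: nat
  assumes t: "t > 1" and n: "n \<ge> 2"
  shows "fact (n - 1) / pochhammer (1 + real n / (t - 1)) (n - 1) =
         (real n - 1) * Beta ((t + real n - 1) / (t - 1)) (real n - 1)"
proof -
  have e1: "(t + real n - 1) / (t - 1) = 1 + real n / (t - 1)" using t by (simp add: field_simps)
  have e2: "real n - 1 = real (n - 1)" using n by simp
  show ?thesis unfolding e1 e2 using t n by (intro beta_poch[symmetric]) auto
qed



lemma powr_deriv1:
  fixes \<rho> \<mu> :: real assumes rho: "\<rho> > 1"
  shows "((\<lambda>x. \<rho> powr (x - 1)) has_real_derivative \<rho> powr (\<mu> - 1) * ln \<rho>) (at \<mu>)"
proof -
  have d: "((\<lambda>x. exp ((x - 1) * ln \<rho>)) has_real_derivative exp ((\<mu> - 1) * ln \<rho>) * (1 * ln \<rho>)) (at \<mu>)"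
    by (intro DERIV_chain2[OF DERIV_exp] DERIV_cmult_right) (auto intro!: derivative_eq_intros)
  have f: "(\<lambda>x. exp ((x - 1) * ln \<rho>)) = (\<lambda>x. \<rho> powr (x - 1))"
    using rho by (simp add: powr_def fun_eq_iff)
  have e: "exp ((\<mu> - 1) * ln \<rho>) * (1 * ln \<rho>) = \<rho> powr (\<mu> - 1) * ln \<rho>"
    using rho by (simp add: powr_def)
  show ?thesis using d unfolding f e .
qed

lemma powr_gt1:
  fixes \<rho> \<mu> :: real assumes rho: "\<rho> > 1" and mu: "\<mu> > 1"
  shows "\<rho> powr (\<mu> - 1) > 1"
proof -
  have "\<rho> powr 0 < \<rho> powr (\<mu> - 1)" using rho mu by (intro powr_less_mono) auto
  then show ?thesis using rho by simp
qed

lemma g_deriv: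
  fixes \<rho> \<mu> c :: real assumes rho: "\<rho> > 1" and mu: "\<mu> > 1"
  shows "((\<lambda>x. (\<rho> powr (x - 1) + c) / (\<rho> powr (x - 1) - 1)) has_real_derivative
    (- ((c + 1) * \<rho> powr (\<mu> - 1) * ln \<rho>) / (\<rho> powr (\<mu> - 1) - 1)\<^sup>2)) (at \<mu>)"
proof -
  define t where "t = \<rho> powr (\<mu> - 1)"
  have t1: "t > 1" unfolding t_def using powr_gt1[OF rho mu] .
  have d1: "((\<lambda>x. \<rho> powr (x - 1)) has_real_derivative t * ln \<rho>) (at \<mu>)"
    unfolding t_def by (rule powr_deriv1[OF rho])
  have ne: "\<rho> powr (\<mu> - 1) - 1 \<noteq> 0" using t1 by (simp add: t_def)
  have "((\<lambda>x. (\<rho> powr (x - 1) + c) / (\<rho> powr (x - 1) - 1)) has_real_derivative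
      ((t * ln \<rho> + 0) * (\<rho> powr (\<mu> - 1) - 1) - (\<rho> powr (\<mu> - 1) + c) * (t * ln \<rho> - 0)) / ((\<rho> powr (\<mu> - 1) - 1) * (\<rho> powr (\<mu> - 1) - 1))) (at \<mu>)"
    by (rule DERIV_divide[OF DERIV_add[OF d1 DERIV_const[of c]] DERIV_diff[OF d1 DERIV_const[of 1]] ne])
  moreover have "((t * ln \<rho> + 0) * (\<rho> powr (\<mu> - 1) - 1) - (\<rho> powr (\<mu> - 1) + c) * (t * ln \<rho> - 0)) / ((\<rho> powr (\<mu> - 1) - 1) * (\<rho> powr (\<mu> - 1) - 1)) =
      - ((c + 1) * \<rho> powr (\<mu> - 1) * ln \<rho>) / (\<rho> powr (\<mu> - 1) - 1)\<^sup>2"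
    unfolding t_def[symmetric] by (simp add: power2_eq_square algebra_simps)
  ultimately show ?thesis by simp
qed

lemma F_deriv:
  fixes F :: "real \<Rightarrow> real" and \<rho> \<mu> :: real and n :: nat
  assumes Fe: "\<And>x. x > 1 \<Longrightarrow> F x = (real n - 1) * Beta ((\<rho> powr (x - 1) + real n - 1) / (\<rho> powr (x - 1) - 1)) (real n - 1)"
    and rho: "\<rho> > 1" and n: "n \<ge> 2" and mu: "\<mu> > 1"
  shows "(F has_real_derivative
          (real n * \<rho> powr (\<mu> - 1) * F \<mu> * ln \<rho> / (\<rho> powr (\<mu> - 1) - 1)\<^sup>2 *
            (Digamma (real n * \<rho> powr (\<mu> - 1) / (\<rho> powr (\<mu> - 1) - 1))
             - Digamma ((\<rho> powr (\<mu> - 1) + real n - 1) / (\<rho> powr (\<mu> - 1) - 1))))) (at \<mu>)"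
proof -
  define t where "t = \<rho> powr (\<mu> - 1)"
  have t1: "t > 1" unfolding t_def using powr_gt1[OF rho mu] .
  define g where "g = (\<lambda>x. (\<rho> powr (x - 1) + (real n - 1)) / (\<rho> powr (x - 1) - 1))"
  define y where "y = real n - 1"
  have y1: "y \<ge> 1" using n by (simp add: y_def)
  have gmu: "g \<mu> = (t + real n - 1) / (t - 1)" by (simp add: g_def t_def algebra_simps)
  have gpos: "g \<mu> > 0" using t1 n unfolding gmu by (intro divide_pos_pos) auto
  have gy: "g \<mu> + y = real n * t / (t - 1)" unfolding gmu y_def using t1 by (simp add: field_simps)
  have gypos: "g \<mu> + y > 0" using gpos y1 by simp
  have dg: "(g has_real_derivative (- ((real n - 1 + 1) * t * ln \<rho>) / (t - 1)\<^sup>2)) (at \<mu>)"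
    unfolding g_def t_def by (rule g_deriv[OF rho mu])
  have np1: "g \<mu> \<notin> \<int>\<^sub>\<le>\<^sub>0" using gpos by auto
  have np2: "g \<mu> + y \<notin> \<int>\<^sub>\<le>\<^sub>0" using gypos by auto
  have dB: "((\<lambda>z. Beta z y) has_real_derivative (Beta (g \<mu>) y * (Digamma (g \<mu>) - Digamma (g \<mu> + y)))) (at (g \<mu>))"
    by (rule has_field_derivative_Beta1[OF np1 np2])
  have dH: "((\<lambda>x. y * Beta (g x) y) has_real_derivative
      y * (Beta (g \<mu>) y * (Digamma (g \<mu>) - Digamma (g \<mu> + y)) * (- ((real n - 1 + 1) * t * ln \<rho>) / (t - 1)\<^sup>2))) (at \<mu>)"
    by (rule DERIV_cmult[OF DERIV_chain2[OF dB dg]])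
  have Fmu: "F \<mu> = y * Beta (g \<mu>) y" using Fe[OF mu] by (simp add: g_def y_def algebra_simps)
  have eqv: "y * (Beta (g \<mu>) y * (Digamma (g \<mu>) - Digamma (g \<mu> + y)) * (- ((real n - 1 + 1) * t * ln \<rho>) / (t - 1)\<^sup>2))
     = real n * t * F \<mu> * ln \<rho> / (t - 1)\<^sup>2 * (Digamma (real n * t / (t - 1)) - Digamma ((t + real n - 1) / (t - 1)))"
    unfolding Fmu gy[symmetric] gmu[symmetric] by (simp add: algebra_simps diff_divide_distrib)
  have "(F has_real_derivative
      real n * t * F \<mu> * ln \<rho> / (t - 1)\<^sup>2 * (Digamma (real n * t / (t - 1)) - Digamma ((t + real n - 1) / (t - 1)))) (at \<mu>)"
  proof (rule has_field_derivative_transform_within_open[where S = "{1<..}"])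
    show "((\<lambda>x. y * Beta (g x) y) has_real_derivative
      real n * t * F \<mu> * ln \<rho> / (t - 1)\<^sup>2 * (Digamma (real n * t / (t - 1)) - Digamma ((t + real n - 1) / (t - 1)))) (at \<mu>)"
      using dH unfolding eqv .
    show "open {1::real<..}" by simp
    show "\<mu> \<in> {1<..}" using mu by simp
    fix x :: real assume "x \<in> {1<..}"
    then show "y * Beta (g x) y = F x" using Fe[of x] by (simp add: g_def y_def algebra_simps)
  qed
  then show ?thesis by (simp add: t_def)
qed


definition Gv :: "nat \<Rightarrow> real \<Rightarrow> real" where
  "Gv n a = fact (n - 1) / pochhammer (1 + a) (n - 1)"

lemma Gv_prod: "Gv n a = (\<Prod>k<n - 1. (real k + 1) / (a + real k + 1))"
proof -
  have "fact (n - 1) = (\<Prod>k<n - 1. (real k + 1))"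
    by (simp add: pochhammer_fact pochhammer_prod atLeast0LessThan add.commute)
  moreover have "pochhammer (1 + a) (n - 1) = (\<Prod>k<n - 1. (a + real k + 1))"
    by (simp add: pochhammer_prod atLeast0LessThan algebra_simps)
  ultimately show ?thesis by (simp add: Gv_def prod_dividef)
qed

lemma Gv_upper:
  assumes n: "n \<ge> 2" and a: "a \<ge> 0"
  shows "Gv n a \<le> 1 / (1 + a)"
proof -
  have "{..<n - 1} = insert 0 {1..<n - 1}" using n by auto
  then have "Gv n a = (1 / (a + 1)) * (\<Prod>k\<in>{1..<n - 1}. (real k + 1) / (a + real k + 1))"
    unfolding Gv_prod by simp
  also have "\<dots> \<le> (1 / (a + 1)) * 1"
    using a by (intro mult_left_mono prod_le_1) auto
  finally show ?thesis by (simp add: add.commute)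
qed

lemma Gv_lower:
  assumes a: "a \<ge> 0"
  shows "exp (- a * harm (n - 1)) \<le> Gv n a"
proof -
  have "exp (- a * harm (n - 1)) = (\<Prod>k<n - 1. exp (- (a / (real k + 1))))"
    by (simp add: harm_altdef exp_sum[symmetric] sum_distrib_left sum_negf divide_inverse add.commute
        flip: sum_negf)
  also have "\<dots> \<le> (\<Prod>k<n - 1. (real k + 1) / (a + real k + 1))"
  proof (rule prod_mono)
    fix k assume "k \<in> {..<n - 1}"
    have "1 + a / (real k + 1) \<le> exp (a / (real k + 1))" by (rule exp_ge_add_one_self)
    moreover have "1 + a / (real k + 1) = (a + real k + 1) / (real k + 1)" by (simp add: field_simps)
    ultimately have "(a + real k + 1) / (real k + 1) \<le> exp (a / (real k + 1))" by simp
    then have "inverse (exp (a / (real k + 1))) \<le> inverse ((a + real k + 1) / (real k + 1))"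
      using a by (intro le_imp_inverse_le) (auto intro: divide_pos_pos)
    then show "0 \<le> exp (- (a / (real k + 1))) \<and> exp (- (a / (real k + 1))) \<le> (real k + 1) / (a + real k + 1)"
      by (simp add: exp_minus)
  qed
  finally show ?thesis by (simp add: Gv_prod)
qed

lemma quantile_between:
  fixes F :: "real \<Rightarrow> real"
  assumes mono: "mono F" and x0: "F x0 < q" and x1: "q \<le> F x1"
  shows "x0 \<le> quantile F q \<and> quantile F q \<le> x1"
proof -
  define S where "S = {x. q \<le> F x}"
  have x1S: "x1 \<in> S" using x1 by (simp add: S_def)
  have lb: "x0 \<le> x" if "x \<in> S" for x
  proof (rule ccontr)
    assume "\<not> x0 \<le> x"
    then have "F x \<le> F x0" using mono by (auto simp: mono_def)
    then show False using that x0 by (simp add: S_def)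
  qed
  have bdd: "bdd_below S" using lb by (auto simp: bdd_below_def)
  have "quantile F q = Inf S" by (simp add: quantile_def S_def)
  moreover have "Inf S \<le> x1" by (rule cInf_lower[OF x1S bdd])
  moreover have "x0 \<le> Inf S" using x1S lb by (intro cInf_greatest) auto
  ultimately show ?thesis by simp
qed

lemma Q_bounds:
  fixes F :: "real \<Rightarrow> real" and \<rho> q :: real and n :: nat
  assumes mono: "mono F" and Fe: "\<And>\<mu>. \<mu> > 1 \<Longrightarrow> F \<mu> = Gv n (real n / (\<rho> powr (\<mu> - 1) - 1))"
    and rho: "\<rho> > 1" and n: "n \<ge> 2" and q: "0 < q" "q < 1"
  shows "quantile F q \<le> 1 + log \<rho> (1 + real n * harm (n - 1) / (- ln q))"
    and "\<And>a. a > 0 \<Longrightarrow> 1 / (1 + a) < q \<Longrightarrow> 1 + log \<rho> (1 + real n / a) \<le> quantile F q"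
proof -
  have Fa: "F (1 + log \<rho> (1 + real n / a)) = Gv n a" if a: "a > 0" for a
  proof -
    have pos: "1 + real n / a > 1" using a n by simp
    have "log \<rho> (1 + real n / a) > 0" using pos rho by simp
    then have "F (1 + log \<rho> (1 + real n / a)) = Gv n (real n / (\<rho> powr (log \<rho> (1 + real n / a)) - 1))"
      using Fe by simp
    also have "\<rho> powr (log \<rho> (1 + real n / a)) = 1 + real n / a"
      using rho pos by simp
    finally show ?thesis using a n by simp
  qed
  define x1 where "x1 = 1 + log \<rho> (1 + real n * harm (n - 1) / (- ln q))"
  have x1: "q \<le> F x1"
  proof -
    define H where "H = (harm (n - 1) :: real)"
    have H: "H > 0" using n by (simp add: H_def)
    have L: "- ln q > 0" using q by simp
    define a1 where "a1 = - ln q / H"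
    have a1: "a1 > 0" unfolding a1_def using divide_pos_pos[OF L H] .
    have "q \<le> Gv n a1"
    proof -
      have "exp (- a1 * H) = q" using H q by (simp add: a1_def)
      then show ?thesis using Gv_lower[of a1 n] a1 by (simp add: H_def)
    qed
    moreover have "real n / a1 = real n * harm (n - 1) / (- ln q)"
      using H L by (simp add: a1_def H_def)
    ultimately show ?thesis using Fa[OF a1] by (simp add: x1_def)
  qed
  have lower: "F (1 + log \<rho> (1 + real n / a)) < q" if a: "a > 0" and aq: "1 / (1 + a) < q" for a
    using Fa[OF a] Gv_upper[OF n, of a] a aq by simp
  have "1 / (1 + 1 / q) < q"
    using q by (simp add: field_simps)
  then have "F (1 + log \<rho> (1 + real n / (1 / q))) < q" using q by (intro lower) auto
  then show "quantile F q \<le> 1 + log \<rho> (1 + real n * harm (n - 1) / (- ln q))"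
    using quantile_between[OF mono _ x1] unfolding x1_def by blast
  fix a assume a: "a > 0" and aq: "1 / (1 + a) < q"
  show "1 + log \<rho> (1 + real n / a) \<le> quantile F q"
    using quantile_between[OF mono lower[OF a aq] x1] by blast
qed


lemma asymp_sandwich:
  fixes f g lb ub :: "'a \<Rightarrow> real"
  assumes ev: "eventually (\<lambda>x. lb x \<le> f x \<and> f x \<le> ub x) F"
    and l: "lb \<sim>[F] g" and u: "ub \<sim>[F] g" and gpos: "eventually (\<lambda>x. g x > 0) F"
  shows "f \<sim>[F] g"
proof (rule asymp_equivI')
  have l': "((\<lambda>x. lb x / g x) \<longlongrightarrow> 1) F"
    using l by (rule asymp_equivD_strong) (use gpos in \<open>auto elim!: eventually_mono\<close>)
  have u': "((\<lambda>x. ub x / g x) \<longlongrightarrow> 1) F"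
    using u by (rule asymp_equivD_strong) (use gpos in \<open>auto elim!: eventually_mono\<close>)
  have e: "eventually (\<lambda>x. lb x / g x \<le> f x / g x \<and> f x / g x \<le> ub x / g x) F"
    using ev gpos by eventually_elim (auto intro: divide_right_mono)
  show "((\<lambda>x. f x / g x) \<longlongrightarrow> 1) F"
    by (rule tendsto_sandwich[OF _ _ l' u']) (use e in \<open>auto elim: eventually_mono\<close>)
qed

lemma harm_le_ln:
  assumes n: "n \<ge> 1"
  shows "harm (n - 1) \<le> 1 + ln (real n)"
proof (cases "n = 1")
  case True then show ?thesis by (simp add: harm_def)
next
  case False
  then have n2: "n - 1 \<ge> 1" using n by simp
  have "harm (n - 1) - ln (real (n - 1)) \<le> harm 1 - ln (real (1::nat))"
    using euler_mascheroni_sequence_decreasing[of 1 "n - 1"] n2 by simp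
  then have "harm (n - 1) \<le> 1 + ln (real (n - 1))" by (simp add: harm_def)
  also have "ln (real (n - 1)) \<le> ln (real n)" using n2 by (subst ln_le_cancel_iff) auto
  finally show ?thesis by simp
qed

lemma t1:
  fixes \<rho> q :: real assumes "\<rho> > 1" "0 < q" "q < 1"
  shows "(\<lambda>n::nat. 1 + log \<rho> (1 + real n * q)) \<sim>[sequentially] (\<lambda>n. log \<rho> (real n))"
  using assms unfolding log_def by real_asymp

lemma t2:
  fixes \<rho> L :: real assumes "\<rho> > 1" "L > 0"
  shows "(\<lambda>n::nat. 1 + log \<rho> (1 + real n * (1 + ln (real n)) / L)) \<sim>[sequentially] (\<lambda>n. log \<rho> (real n))"
  using assms unfolding log_def by real_asymp

lemma t3:
  fixes \<rho> L :: real assumes "\<rho> > 1" "L > 0"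
  shows "(\<lambda>n::nat. log \<rho> ((real n * ln (real n - 1) + L) / L) + 1) \<sim>[sequentially] (\<lambda>n. log \<rho> (real n))"
  using assms unfolding log_def by real_asymp

lemma t4:
  fixes \<rho> L :: real assumes "\<rho> > 1" "L > 0"
  shows "(\<lambda>n::nat. log \<rho> (real n) - log \<rho> L) \<sim>[sequentially] (\<lambda>n. log \<rho> (real n))"
  using assms unfolding log_def by real_asymp

lemma regime_seq:
  fixes Q :: "nat \<Rightarrow> real" and \<rho> q :: real
  assumes rho: "\<rho> > 1" and q: "0 < q" "q < 1"
    and ub: "\<And>n. n \<ge> 2 \<Longrightarrow> Q n \<le> 1 + log \<rho> (1 + real n * harm (n - 1) / (- ln q))"
    and lb: "\<And>n. n \<ge> 2 \<Longrightarrow> 1 + log \<rho> (1 + real n * q) \<le> Q n"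
  shows "Q \<sim>[sequentially] (\<lambda>n. log \<rho> (real n))"
proof (rule asymp_sandwich[OF _ t1[OF rho q] t2[OF rho, of "- ln q"]])
  have L: "- ln q > 0" using q by simp
  show "eventually (\<lambda>n. 1 + log \<rho> (1 + real n * q) \<le> Q n \<and> Q n \<le> 1 + log \<rho> (1 + real n * (1 + ln (real n)) / - ln q)) sequentially"
    using eventually_ge_at_top[of "2::nat"]
  proof eventually_elim
    case (elim n)
    have h: "harm (n - 1) \<le> 1 + ln (real n)" using elim by (intro harm_le_ln) simp
    have "real n * harm (n - 1) / (- ln q) \<le> real n * (1 + ln (real n)) / (- ln q)"
      using h L by (intro divide_right_mono mult_left_mono) auto
    moreover have "0 < 1 + real n * harm (n - 1) / (- ln q)"
      using L by (intro add_pos_nonneg divide_nonneg_pos mult_nonneg_nonneg harm_nonneg) auto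
    ultimately have "log \<rho> (1 + real n * harm (n - 1) / (- ln q)) \<le> log \<rho> (1 + real n * (1 + ln (real n)) / (- ln q))"
      using rho by (subst log_le_cancel_iff) auto
    then show ?case using ub[OF elim] lb[OF elim] by simp
  qed
  show "eventually (\<lambda>n. log \<rho> (real n) > 0) sequentially"
    using eventually_ge_at_top[of "2::nat"] by eventually_elim (use rho in simp)
  show "- ln q > 0" by (rule L)
qed

lemma t5:
  fixes \<rho> c :: real assumes "\<rho> > 1" "c > 0"
  shows "(\<lambda>q. 1 + log \<rho> (1 + c * q / (2 * (1 - q)))) \<sim>[at_left 1] (\<lambda>q. - log \<rho> (- ln q))"
  using assms unfolding log_def by real_asymp

lemma t6:
  fixes \<rho> c :: real assumes "\<rho> > 1" "c > 0"
  shows "(\<lambda>q. 1 + log \<rho> (1 + c / (- ln q))) \<sim>[at_left 1] (\<lambda>q. - log \<rho> (- ln q))"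
  using assms unfolding log_def by real_asymp

lemma t7:
  fixes \<rho> k :: real assumes "\<rho> > 1" "k > 0"
  shows "(\<lambda>q. log \<rho> ((k + ln (1 / q)) / ln (1 / q)) + 1) \<sim>[at_left 1] (\<lambda>q. - log \<rho> (- ln q))"
  using assms unfolding log_def by real_asymp

lemma t8:
  fixes \<rho> c :: real assumes "\<rho> > 1" "c > 0"
  shows "(\<lambda>q. log \<rho> c - log \<rho> (- ln q)) \<sim>[at_left 1] (\<lambda>q. - log \<rho> (- ln q))"
  using assms unfolding log_def by real_asymp

lemma t9:
  fixes \<rho> c :: real assumes "\<rho> > 1" "c > 0"
  shows "((\<lambda>q. 1 + log \<rho> (1 + c * q)) \<longlongrightarrow> 1) (at_right 0)"
  using assms unfolding log_def by real_asymp

lemma t10: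
  fixes \<rho> c :: real assumes "\<rho> > 1" "c > 0"
  shows "((\<lambda>q. 1 + log \<rho> (1 + c / (- ln q))) \<longlongrightarrow> 1) (at_right 0)"
  using assms unfolding log_def by real_asymp

lemma t11:
  fixes \<rho> k :: real assumes "\<rho> > 1" "k > 0"
  shows "((\<lambda>q. log \<rho> ((k + ln (1 / q)) / ln (1 / q)) + 1) \<longlongrightarrow> 1) (at_right 0)"
  using assms unfolding log_def by real_asymp

lemma t12:
  fixes \<rho> :: real and u :: real assumes "\<rho> > 1"
  shows "((\<lambda>n::nat. (ln \<rho> + u + ln (1 + ln (real n))) / ln (real n)) \<longlonglongrightarrow> 0)"
  using assms by real_asymp

lemma ev_left1_pos:
  fixes \<rho> :: real assumes "\<rho> > 1"
  shows "eventually (\<lambda>q. - log \<rho> (- ln q) > 0) (at_left 1)"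
  using assms unfolding log_def by real_asymp

lemma regime_left1:
  fixes Q :: "real \<Rightarrow> real" and \<rho> c H :: real
  assumes rho: "\<rho> > 1" and c: "c > 0" and H: "H > 0"
    and ub: "\<And>q. 0 < q \<Longrightarrow> q < 1 \<Longrightarrow> Q q \<le> 1 + log \<rho> (1 + c * H / (- ln q))"
    and lb: "\<And>q. 0 < q \<Longrightarrow> q < 1 \<Longrightarrow> 1 + log \<rho> (1 + c * q / (2 * (1 - q))) \<le> Q q"
  shows "Q \<sim>[at_left 1] (\<lambda>q. - log \<rho> (- ln q))"
proof (rule asymp_sandwich[OF _ t5[OF rho c] t6[OF rho, of "c * H"] ev_left1_pos[OF rho]])
  show "0 < c * H" using c H by simp
  have "eventually (\<lambda>q. q \<in> {0<..<1}) (at_left (1::real))"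
    by (rule eventually_at_left_real) simp
  then show "eventually (\<lambda>q. 1 + log \<rho> (1 + c * q / (2 * (1 - q))) \<le> Q q \<and> Q q \<le> 1 + log \<rho> (1 + c * H / - ln q)) (at_left 1)"
    by eventually_elim (use ub lb in auto)
qed

lemma regime_right0:
  fixes Q A :: "real \<Rightarrow> real" and \<rho> c c' :: real
  assumes rho: "\<rho> > 1" and c: "c > 0" and c': "c' > 0"
    and ub: "\<And>q. 0 < q \<Longrightarrow> q < 1 \<Longrightarrow> Q q \<le> 1 + log \<rho> (1 + c' / (- ln q))"
    and lb: "\<And>q. 0 < q \<Longrightarrow> q < 1 \<Longrightarrow> 1 + log \<rho> (1 + c * q) \<le> Q q"
    and A: "(A \<longlongrightarrow> 1) (at_right 0)"
  shows "Q \<sim>[at_right 0] A"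
proof (rule asymp_equivI')
  have "eventually (\<lambda>q. q \<in> {0<..<1}) (at_right (0::real))"
    by (rule eventually_at_right_real) simp
  then have ev: "eventually (\<lambda>q. 1 + log \<rho> (1 + c * q) \<le> Q q \<and> Q q \<le> 1 + log \<rho> (1 + c' / (- ln q))) (at_right 0)"
    by eventually_elim (use ub lb in auto)
  have "(Q \<longlongrightarrow> 1) (at_right 0)"
    by (rule tendsto_sandwich[OF _ _ t9[OF rho c] t10[OF rho c']]) (use ev in \<open>auto elim: eventually_mono\<close>)
  then show "((\<lambda>x. Q x / A x) \<longlongrightarrow> 1) (at_right 0)"
    using tendsto_divide[OF _ A] by fastforce
qed

lemma ratio_bound:
  fixes Qv Bv r E u :: real
  assumes r: "r > 0" and u: "u > 0" and Br: "Bv * r \<ge> u" and E: "\<bar>Qv * r - Bv * r\<bar> \<le> E"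
  shows "\<bar>Qv / Bv - 1\<bar> \<le> E / u"
proof -
  have B: "Bv > 0" using Br u r by (smt (verit) mult_nonpos_nonneg)
  have e1: "\<bar>Qv * r - Bv * r\<bar> = \<bar>Qv - Bv\<bar> * r" using r by (simp add: left_diff_distrib[symmetric] abs_mult)
  have e2: "Qv / Bv - 1 = (Qv - Bv) / Bv" using B by (simp add: field_simps)
  have "\<bar>Qv / Bv - 1\<bar> = \<bar>Qv * r - Bv * r\<bar> / (Bv * r)"
    unfolding e1 e2 using B r by (simp add: abs_div)
  also have "\<dots> \<le> E / (Bv * r)" using B r E by (intro divide_right_mono) auto
  also have "\<dots> \<le> E / u" using E u Br by (intro divide_left_mono) auto
  finally show ?thesis .
qed

lemma joint_Q_ineq:
  fixes Qv \<rho> q :: real and n :: nat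
  assumes rho: "\<rho> > 1" and n: "n \<ge> 3" and q: "1/2 < q" "q < 1"
    and ub: "Qv \<le> 1 + log \<rho> (1 + real n * harm (n - 1) / (- ln q))"
    and lb: "1 + log \<rho> (1 + real n * q / (2 * (1 - q))) \<le> Qv"
  shows "\<bar>Qv / (log \<rho> (real n) - log \<rho> (- ln q)) - 1\<bar> \<le> (ln \<rho> + ln 4 + ln (1 + ln (real n))) / ln (real n)"
proof -
  define r where "r = ln \<rho>"
  define u where "u = ln (real n)"
  define L where "L = - ln q"
  have r: "r > 0" using rho by (simp add: r_def)
  have u: "u > 0" using n by (simp add: u_def)
  have L0: "L > 0" using q by (simp add: L_def)
  have "ln (1/2) < ln q" using q by (subst ln_less_cancel_iff) auto
  then have "L < ln 2" by (simp add: L_def ln_div)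
  then have L1: "L < 1" using ln_2_less_1 by simp
  have lnL: "ln L < 0" using L0 L1 by simp
  have qL: "1 - q \<le> L" using ln_le_minus_one[of q] q by (simp add: L_def)
  have nr: "real n \<ge> 3" using n by simp
  define Bv where "Bv = log \<rho> (real n) - log \<rho> (- ln q)"
  have Br: "Bv * r = u - ln L" using r by (simp add: Bv_def log_def u_def L_def r_def field_simps)
  have Bu: "Bv * r \<ge> u" using Br lnL by simp
  have lbr: "Qv * r \<ge> r + ln (1 + real n * q / (2 * (1 - q)))"
    using mult_right_mono[OF lb, of r] r by (simp add: log_def r_def field_simps)
  have ubr: "Qv * r \<le> r + ln (1 + real n * harm (n - 1) / L)"
    using mult_right_mono[OF ub, of r] r by (simp add: log_def r_def L_def field_simps)
  have low: "real n / (4 * L) \<le> 1 + real n * q / (2 * (1 - q))"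
  proof -
    have "real n * (1/2) / (2 * L) \<le> real n * q / (2 * (1 - q))"
      using q qL L0 by (intro frac_le mult_left_mono) auto
    then show ?thesis by simp
  qed
  have "ln (real n / (4 * L)) \<le> ln (1 + real n * q / (2 * (1 - q)))"
  proof -
    have "0 < 1 + real n * q / (2 * (1 - q))" using q by (intro add_pos_nonneg divide_nonneg_pos) auto
    then show ?thesis using low L0 n by (subst ln_le_cancel_iff) auto
  qed
  moreover have "ln (real n / (4 * L)) = u - ln 4 - ln L"
    using L0 n by (simp add: u_def ln_div ln_mult)
  ultimately have lo: "Qv * r - Bv * r \<ge> r - ln 4" using lbr Br by simp
  have H: "harm (n - 1) \<le> 1 + u" using harm_le_ln[of n] n by (simp add: u_def)
  have up1: "1 + real n * harm (n - 1) / L \<le> 2 * real n * (1 + u) / L"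
  proof -
    have "real n * harm (n - 1) / L \<le> real n * (1 + u) / L"
      using H L0 by (intro divide_right_mono mult_left_mono) auto
    moreover have "1 \<le> real n * (1 + u) / L"
    proof -
      have "L \<le> real n * (1 + u)" using L1 u nr by (smt (verit) mult_le_cancel_left1)
      then show ?thesis using L0 by simp
    qed
    moreover have "2 * real n * (1 + u) / L = 2 * (real n * (1 + u) / L)" by simp
    ultimately show ?thesis by (smt (verit))
  qed
  have pos1: "0 < 1 + real n * harm (n - 1) / L"
    using L0 by (intro add_pos_nonneg divide_nonneg_pos mult_nonneg_nonneg harm_nonneg) auto
  have "ln (1 + real n * harm (n - 1) / L) \<le> ln (2 * real n * (1 + u) / L)"
    using up1 pos1 by (subst ln_le_cancel_iff) auto
  moreover have "ln (2 * real n * (1 + u) / L) = ln 2 + u + ln (1 + u) - ln L"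
  proof -
    have p: "2 * real n * (1 + u) > 0" using n u by simp
    have a1: "ln (2 * real n * (1 + u) / L) = ln (2 * real n * (1 + u)) - ln L" using p L0 u n by (simp add: ln_div)
    have a2: "ln (2 * real n * (1 + u)) = ln (2 * real n) + ln (1 + u)" using n u by (intro ln_mult_pos) auto
    have a3: "ln (2 * real n) = ln 2 + u" using n unfolding u_def by (intro ln_mult_pos) auto
    show ?thesis using a1 a2 a3 by simp
  qed
  ultimately have hi: "Qv * r - Bv * r \<le> r + ln 2 + ln (1 + u)" using ubr Br by simp
  have "ln 2 \<le> ln (4::real)" by simp
  moreover have "ln (1 + u) \<ge> 0" using u by simp
  ultimately have "\<bar>Qv * r - Bv * r\<bar> \<le> r + ln 4 + ln (1 + u)" using lo hi r by linarith
  from ratio_bound[OF r u Bu this] show ?thesis by (simp add: Bv_def r_def u_def)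
qed

lemma joint_A_ineq:
  fixes \<rho> q :: real and n :: nat
  assumes rho: "\<rho> > 1" and n: "n \<ge> 3" and q: "1/2 < q" "q < 1"
  shows "\<bar>(log \<rho> ((real n * ln (real n - 1) + ln (1 / q)) / ln (1 / q)) + 1) / (log \<rho> (real n) - log \<rho> (- ln q)) - 1\<bar>
     \<le> (ln \<rho> + ln 4 + ln (1 + ln (real n))) / ln (real n)"
proof -
  define r where "r = ln \<rho>"
  define u where "u = ln (real n)"
  define L where "L = - ln q"
  define k where "k = real n * ln (real n - 1)"
  have r: "r > 0" using rho by (simp add: r_def)
  have u: "u > 0" using n by (simp add: u_def)
  have L0: "L > 0" using q by (simp add: L_def)
  have "ln (1/2) < ln q" using q by (subst ln_less_cancel_iff) auto
  then have "L < ln 2" by (simp add: L_def ln_div)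
  then have L1: "L < 1" using ln_2_less_1 by simp
  have lnL: "ln L < 0" using L0 L1 by simp
  have nr: "real n \<ge> 3" using n by simp
  have l1q: "ln (1 / q) = L" using q by (simp add: L_def ln_div)
  define Bv where "Bv = log \<rho> (real n) - log \<rho> (- ln q)"
  have Br: "Bv * r = u - ln L" using r by (simp add: Bv_def log_def u_def L_def r_def field_simps)
  have Bu: "Bv * r \<ge> u" using Br lnL by simp
  define Av where "Av = log \<rho> ((real n * ln (real n - 1) + ln (1 / q)) / ln (1 / q)) + 1"
  have kl: "k \<ge> real n / 4"
  proof -
    have "ln 2 \<le> ln (real n - 1)" using nr by (subst ln_le_cancel_iff) auto
    moreover have "(2/3::real) \<le> ln 2" by (rule ln2_ge_two_thirds)
    ultimately have "1/4 \<le> ln (real n - 1)" by simp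
    then show ?thesis unfolding k_def using nr by (simp add: mult_left_mono[of "1/4" _ "real n", simplified])
  qed
  have ku: "k \<le> real n * u"
  proof -
    have "ln (real n - 1) \<le> u" unfolding u_def using nr by (subst ln_le_cancel_iff) auto
    then show ?thesis unfolding k_def using nr by (intro mult_left_mono) auto
  qed
  have kpos: "k + L > 0" using kl L0 nr by simp
  have Ar: "Av * r = r + ln (k + L) - ln L"
  proof -
    have "Av = ln ((k + L) / L) / r + 1" unfolding Av_def l1q k_def r_def log_def by simp
    moreover have "ln ((k + L) / L) = ln (k + L) - ln L" using kpos L0 by (simp add: ln_div)
    ultimately show ?thesis using r by (simp add: field_simps)
  qed
  have lo1: "ln (real n / 4) \<le> ln (k + L)" using kl L0 nr kpos by (subst ln_le_cancel_iff) auto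
  have lo2: "ln (real n / 4) = u - ln 4" using nr by (simp add: u_def ln_div)
  have hi1: "ln (k + L) \<le> ln (real n * (1 + u))"
  proof -
    have "k + L \<le> real n * (1 + u)" using ku L1 nr by (simp add: algebra_simps)
    then show ?thesis using kpos u nr by (subst ln_le_cancel_iff) auto
  qed
  have hi2: "ln (real n * (1 + u)) = u + ln (1 + u)"
  proof -
    have "0 < 1 + u" using u by simp
    then show ?thesis using nr by (simp add: ln_mult_pos u_def)
  qed
  have lo: "Av * r - Bv * r \<ge> r - ln 4" using Ar Br lo1 lo2 by simp
  have hi: "Av * r - Bv * r \<le> r + ln (1 + u)" using Ar Br hi1 hi2 by simp
  have "ln (4::real) \<ge> 0" by simp
  moreover have "ln (1 + u) \<ge> 0" using u by simp
  ultimately have "\<bar>Av * r - Bv * r\<bar> \<le> r + ln 4 + ln (1 + u)" using lo hi r by linarith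
  from ratio_bound[OF r u Bu this] show ?thesis by (simp add: Av_def Bv_def r_def u_def)
qed

lemma joint_equiv:
  fixes f g :: "nat \<times> real \<Rightarrow> real" and e :: "nat \<Rightarrow> real"
  assumes ev: "\<And>n q. n \<ge> 3 \<Longrightarrow> 1/2 < q \<Longrightarrow> q < 1 \<Longrightarrow> \<bar>f (n, q) / g (n, q) - 1\<bar> \<le> e n"
    and e: "e \<longlonglongrightarrow> 0"
  shows "f \<sim>[sequentially \<times>\<^sub>F at_left 1] g"
proof (rule asymp_equivI')
  let ?F = "sequentially \<times>\<^sub>F at_left (1::real)"
  have evr: "eventually (\<lambda>q. q \<in> {1/2<..<1}) (at_left (1::real))"
    by (rule eventually_at_left_real) simp
  have "eventually (\<lambda>p. norm (f p / g p - 1) \<le> e (fst p)) ?F"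
    unfolding eventually_prod_filter
  proof (intro exI conjI allI impI)
    show "eventually (\<lambda>n. n \<ge> 3) sequentially" by (rule eventually_ge_at_top)
    show "eventually (\<lambda>q. q \<in> {1/2<..<1}) (at_left (1::real))" by (rule evr)
    fix n q assume "n \<ge> (3::nat)" "q \<in> {1/2<..<(1::real)}"
    then show "norm (f (n, q) / g (n, q) - 1) \<le> e (fst (n, q))" using ev by simp
  qed
  moreover have "((\<lambda>p. e (fst p)) \<longlongrightarrow> 0) ?F"
    using filterlim_compose[OF e filterlim_fst[of sequentially "at_left (1::real)"]] by simp
  ultimately have "((\<lambda>p. f p / g p - 1) \<longlongrightarrow> 0) ?F" by (rule Lim_null_comparison)
  then show "((\<lambda>p. f p / g p) \<longlongrightarrow> 1) ?F" by (rule LIM_zero_cancel)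
qed

theorem theorem1:
  fixes M :: "nat \<Rightarrow> 'a measure" and X :: "nat \<Rightarrow> nat \<Rightarrow> 'a \<Rightarrow> real"
    and l \<rho> :: real
  defines "F \<equiv> (\<lambda>n. cdf (distr (M n) borel (Mstat \<rho> n (X n))))"
  assumes prob: "\<And>n. prob_space (M n)"
    and indep: "\<And>n. prob_space.indep_vars (M n) (\<lambda>_. borel) (X n) {..<n}"
    and expo: "\<And>n i. i < n \<Longrightarrow> distributed (M n) lborel (X n i) (exponential_density l)"
    and lam: "l > 0" and rho: "\<rho> > 1"
  shows
    "(\<forall>n\<ge>2. \<forall>\<mu>>1.
        F n \<mu> = (real n - 1) * Beta ((\<rho> powr (\<mu> - 1) + real n - 1) / (\<rho> powr (\<mu> - 1) - 1)) (real n - 1))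
   \<and> (\<forall>n\<ge>2. \<forall>\<mu>>1.
        (F n has_real_derivative
          (real n * \<rho> powr (\<mu> - 1) * F n \<mu> * ln \<rho> / (\<rho> powr (\<mu> - 1) - 1)\<^sup>2 *
            (Digamma (real n * \<rho> powr (\<mu> - 1) / (\<rho> powr (\<mu> - 1) - 1))
             - Digamma ((\<rho> powr (\<mu> - 1) + real n - 1) / (\<rho> powr (\<mu> - 1) - 1))))) (at \<mu>))
   \<and> (let Q = (\<lambda>n q. quantile (F n) q);
          A = (\<lambda>n q. log \<rho> ((real n * ln (real n - 1) + ln (1 / q)) / ln (1 / q)) + 1);
          B = (\<lambda>n q. log \<rho> (real n) - log \<rho> (- ln q))
      in
        (\<forall>q\<in>{0<..<1}. (\<lambda>n. Q n q) \<sim>[sequentially] (\<lambda>n. A n q)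
                       \<and> (\<lambda>n. A n q) \<sim>[sequentially] (\<lambda>n. B n q))
      \<and> (\<forall>n\<ge>3. (Q n) \<sim>[at_left 1] (A n) \<and> (A n) \<sim>[at_left 1] (B n))
      \<and> ((\<lambda>(n, q). Q n q) \<sim>[sequentially \<times>\<^sub>F at_left 1] (\<lambda>(n, q). A n q)
         \<and> (\<lambda>(n, q). A n q) \<sim>[sequentially \<times>\<^sub>F at_left 1] (\<lambda>(n, q). B n q))
      \<and> (\<forall>n\<ge>2. (Q n) \<sim>[at_right 0] (A n)))"
proof -
  have Xm: "X n i \<in> borel_measurable (M n)" if "i < n" for n i
    using distributed_measurable[OF expo[OF that]] by simp
  have Sm: "Mstat \<rho> n (X n) \<in> borel_measurable (M n)" for n
    by (rule Mstat_meas) (rule Xm)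
  have mono: "mono (F n)" for n
  proof -
    interpret real_distribution "distr (M n) borel (Mstat \<rho> n (X n))"
      by (rule prob_space.real_distribution_distr[OF prob Sm])
    show ?thesis unfolding F_def by (auto intro!: monoI cdf_nondecreasing)
  qed
  have FG: "F n \<mu> = Gv n (real n / (\<rho> powr (\<mu> - 1) - 1))" if n: "n \<ge> 2" and mu: "\<mu> > 1" for n \<mu>
    unfolding F_def Gv_def
    using cdf_formula[OF prob indep expo lam rho n mu] value_G[OF powr_gt1[OF rho mu] n] by simp
  have P1: "F n \<mu> = (real n - 1) * Beta ((\<rho> powr (\<mu> - 1) + real n - 1) / (\<rho> powr (\<mu> - 1) - 1)) (real n - 1)"
    if n: "n \<ge> 2" and mu: "\<mu> > 1" for n \<mu>
    using FG[OF n mu] value_Beta[OF powr_gt1[OF rho mu] n] by (simp add: Gv_def)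
  have P2: "(F n has_real_derivative
          (real n * \<rho> powr (\<mu> - 1) * F n \<mu> * ln \<rho> / (\<rho> powr (\<mu> - 1) - 1)\<^sup>2 *
            (Digamma (real n * \<rho> powr (\<mu> - 1) / (\<rho> powr (\<mu> - 1) - 1))
             - Digamma ((\<rho> powr (\<mu> - 1) + real n - 1) / (\<rho> powr (\<mu> - 1) - 1))))) (at \<mu>)"
    if n: "n \<ge> 2" and mu: "\<mu> > 1" for n \<mu>
    by (rule F_deriv[OF _ rho n mu]) (rule P1[OF n])
  define Q where "Q = (\<lambda>n q. quantile (F n) q)"
  have QU: "Q n q \<le> 1 + log \<rho> (1 + real n * harm (n - 1) / (- ln q))"
    if n: "n \<ge> 2" and q: "0 < q" "q < 1" for n q
    unfolding Q_def by (rule Q_bounds(1)[OF mono FG[OF n] rho n q])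
  have QLa: "1 + log \<rho> (1 + real n / a) \<le> Q n q"
    if n: "n \<ge> 2" and q: "0 < q" "q < 1" and a: "a > 0" "1 / (1 + a) < q" for n q a
    unfolding Q_def by (rule Q_bounds(2)[OF mono FG[OF n] rho n q a])
  have QL1: "1 + log \<rho> (1 + real n * q) \<le> Q n q"
    if n: "n \<ge> 2" and q: "0 < q" "q < 1" for n q
  proof -
    have "1 / (1 + 1 / q) < q" using q by (simp add: field_simps)
    then show ?thesis using QLa[OF n q, of "1 / q"] q by simp
  qed
  have QL2: "1 + log \<rho> (1 + real n * q / (2 * (1 - q))) \<le> Q n q"
    if n: "n \<ge> 2" and q: "0 < q" "q < 1" for n q
  proof -
    have a: "2 * (1 - q) / q > 0" using q by simp
    have "1 / (1 + 2 * (1 - q) / q) = q / (2 - q)" using q by (simp add: field_simps)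
    also have "\<dots> < q" using q by (simp add: field_simps)
    finally have "1 / (1 + 2 * (1 - q) / q) < q" .
    moreover have "real n / (2 * (1 - q) / q) = real n * q / (2 * (1 - q))" using q by simp
    ultimately show ?thesis using QLa[OF n q a] by simp
  qed
  define A where "A = (\<lambda>n q. log \<rho> ((real n * ln (real n - 1) + ln (1 / q)) / ln (1 / q)) + 1)"
  define B where "B = (\<lambda>n q. log \<rho> (real n) - log \<rho> (- ln q))"
  have R1: "\<forall>q\<in>{0<..<1}. (\<lambda>n. Q n q) \<sim>[sequentially] (\<lambda>n. A n q) \<and> (\<lambda>n. A n q) \<sim>[sequentially] (\<lambda>n. B n q)"
  proof
    fix q :: real assume "q \<in> {0<..<1}"
    then have q: "0 < q" "q < 1" by auto
    have Qs: "(\<lambda>n. Q n q) \<sim>[sequentially] (\<lambda>n. log \<rho> (real n))"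
      by (rule regime_seq[OF rho q]) (use QU QL1 q in auto)
    have L: "ln (1 / q) > 0" using q by (simp add: ln_div)
    have As: "(\<lambda>n. A n q) \<sim>[sequentially] (\<lambda>n. log \<rho> (real n))"
      unfolding A_def using t3[OF rho L] by simp
    have L': "- ln q > 0" using q by simp
    have Bs: "(\<lambda>n. B n q) \<sim>[sequentially] (\<lambda>n. log \<rho> (real n))"
      unfolding B_def using t4[OF rho L'] by simp
    show "(\<lambda>n. Q n q) \<sim>[sequentially] (\<lambda>n. A n q) \<and> (\<lambda>n. A n q) \<sim>[sequentially] (\<lambda>n. B n q)"
      using asymp_equiv_trans[OF Qs asymp_equiv_symI[OF As]] asymp_equiv_trans[OF As asymp_equiv_symI[OF Bs]]
      by simp
  qed
  have R2: "\<forall>n\<ge>3. (Q n) \<sim>[at_left 1] (A n) \<and> (A n) \<sim>[at_left 1] (B n)"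
  proof (intro allI impI)
    fix n :: nat assume n3: "n \<ge> 3"
    then have n: "n \<ge> 2" by simp
    have c: "real n > 0" using n by simp
    have H: "harm (n - 1) > (0::real)" using n by simp
    have Ql: "Q n \<sim>[at_left 1] (\<lambda>q. - log \<rho> (- ln q))"
      by (rule regime_left1[OF rho c H]) (use QU[OF n] QL2[OF n] in auto)
    have k: "real n * ln (real n - 1) > 0" using n3 by simp
    have Al: "A n \<sim>[at_left 1] (\<lambda>q. - log \<rho> (- ln q))"
      unfolding A_def using t7[OF rho k] by simp
    have Bl: "B n \<sim>[at_left 1] (\<lambda>q. - log \<rho> (- ln q))"
      unfolding B_def using t8[OF rho c] by simp
    show "(Q n) \<sim>[at_left 1] (A n) \<and> (A n) \<sim>[at_left 1] (B n)"
      using asymp_equiv_trans[OF Ql asymp_equiv_symI[OF Al]] asymp_equiv_trans[OF Al asymp_equiv_symI[OF Bl]]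
      by simp
  qed
  have e0: "(\<lambda>n::nat. (ln \<rho> + ln 4 + ln (1 + ln (real n))) / ln (real n)) \<longlonglongrightarrow> 0"
    by (rule t12[OF rho])
  have QB: "(\<lambda>(n, q). Q n q) \<sim>[sequentially \<times>\<^sub>F at_left 1] (\<lambda>(n, q). B n q)"
  proof (rule joint_equiv[OF _ e0])
    fix n :: nat and q :: real assume n3: "n \<ge> 3" and q: "1/2 < q" "q < 1"
    have n: "n \<ge> 2" and q0: "0 < q" using n3 q by auto
    show "\<bar>(case (n, q) of (n, q) \<Rightarrow> Q n q) / (case (n, q) of (n, q) \<Rightarrow> B n q) - 1\<bar>
        \<le> (ln \<rho> + ln 4 + ln (1 + ln (real n))) / ln (real n)"
      using joint_Q_ineq[OF rho n3 q QU[OF n q0 q(2)] QL2[OF n q0 q(2)]] by (simp add: B_def)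
  qed
  have AB: "(\<lambda>(n, q). A n q) \<sim>[sequentially \<times>\<^sub>F at_left 1] (\<lambda>(n, q). B n q)"
  proof (rule joint_equiv[OF _ e0])
    fix n :: nat and q :: real assume n3: "n \<ge> 3" and q: "1/2 < q" "q < 1"
    show "\<bar>(case (n, q) of (n, q) \<Rightarrow> A n q) / (case (n, q) of (n, q) \<Rightarrow> B n q) - 1\<bar>
        \<le> (ln \<rho> + ln 4 + ln (1 + ln (real n))) / ln (real n)"
      using joint_A_ineq[OF rho n3 q] by (simp add: A_def B_def)
  qed
  have R3: "(\<lambda>(n, q). Q n q) \<sim>[sequentially \<times>\<^sub>F at_left 1] (\<lambda>(n, q). A n q)
         \<and> (\<lambda>(n, q). A n q) \<sim>[sequentially \<times>\<^sub>F at_left 1] (\<lambda>(n, q). B n q)"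
    using asymp_equiv_trans[OF QB asymp_equiv_symI[OF AB]] AB by simp
  have R4: "\<forall>n\<ge>2. (Q n) \<sim>[at_right 0] (A n)"
  proof (intro allI impI)
    fix n :: nat assume n: "n \<ge> 2"
    have c: "real n > 0" using n by simp
    have c': "real n * harm (n - 1) > 0" using n by simp
    have Alim: "(A n \<longlongrightarrow> 1) (at_right 0)"
    proof (cases "n = 2")
      case True
      have "eventually (\<lambda>q. q \<in> {0<..<1}) (at_right (0::real))"
        by (rule eventually_at_right_real) simp
      then have "eventually (\<lambda>q. A n q = 1) (at_right 0)"
      proof eventually_elim
        case (elim q)
        then have "ln (1 / q) \<noteq> 0" by (simp add: ln_div)
        then show ?case using True by (simp add: A_def)
      qed
      then show ?thesis by (rule tendsto_eventually)
    next
      case False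
      then have k: "real n * ln (real n - 1) > 0" using n by simp
      show ?thesis unfolding A_def using t11[OF rho k] by simp
    qed
    show "(Q n) \<sim>[at_right 0] (A n)"
      by (rule regime_right0[OF rho c c' _ _ Alim]) (use QU[OF n] QL1[OF n] in auto)
  qed
  show ?thesis
    using P1 P2 R1 R2 R3 R4 unfolding Let_def Q_def A_def B_def by blast
qed


end
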